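(* For any step size $\eta\le4/\rho^2$, any $Z\in\mathbb{R}^{m\times d}$ and any $t$, \[ \|W_t-Z\|^2+2\eta\sum_{i<t}\widehat{\mathcal R}^{(i)}(W_{i+1})\le\|W_0-Z\|^2+2\eta\sum_{i<t}\widehat{\mathcal R}^{(i)}(Z). \]
   Context: Sample $((x_k,y_k))_{k=1}^n$ with $\|x_k\|\le1$, $y_k\in\{\pm1\}$. $\ell(r)=\ln(1+e^{-r})$. Network of width $m$, temperature $\rho>0$, signs $a_j\in\{\pm1\}$: for $W$ with rows $w_j^\top$, $f(x;W)=\frac{\rho}{\sqrt m}\sum_ja_j\max\{0,w_j^\top x\}$, $\nabla f(x;W)=\frac{\rho}{\sqrt m}\sum_ja_j\mathbf 1[w_j^\top x\ge0]e_jx^\top$. $\widehat{\mathcal R}(W)=\frac1n\sum_k\ell(y_kf(x_k;W))$, $\nabla\widehat{\mathcal R}(W)=\frac1n\sum_k\ell'(y_kf(x_k;W))y_k\nabla f(x_k;W)$. Gradient descent from the initialization $W_0$: $W_{i+1}=W_i-\eta\nabla\widehat{\mathcal R}(W_i)$. $\widehat{\mathcal R}^{(i)}(V)=\frac1n\sum_k\ell(y_k\langle\nabla f(x_k;W_i),V\rangle)$ with $\langle A,B\rangle=\mathrm{tr}(A^\top B)$. $\|\cdot\|$ Frobenius norm. *)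

theory Defs
  imports "HOL-Analysis.Analysis"
begin

text \<open>Matrices in R^{m x d} are represented as functions nat => nat => real,
  only entries j < m, l < d being relevant; vectors in R^d as nat => real
  (entries l < d). The sample is indexed by k < n.\<close>

type_synonym mat = "nat \<Rightarrow> nat \<Rightarrow> real"
type_synonym vec = "nat \<Rightarrow> real"

definition logloss :: "real \<Rightarrow> real" where
  "logloss r = ln (1 + exp (- r))"

definition logloss' :: "real \<Rightarrow> real" where
  "logloss' r = - 1 / (1 + exp r)"

definition vnorm :: "nat \<Rightarrow> vec \<Rightarrow> real" where
  "vnorm d x = sqrt (\<Sum>l<d. (x l)^2)"

definition frob :: "nat \<Rightarrow> nat \<Rightarrow> mat \<Rightarrow> real" where
  "frob m d A = sqrt (\<Sum>j<m. \<Sum>l<d. (A j l)^2)"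

definition frob_inner :: "nat \<Rightarrow> nat \<Rightarrow> mat \<Rightarrow> mat \<Rightarrow> real" where
  "frob_inner m d A B = (\<Sum>j<m. \<Sum>l<d. A j l * B j l)"

definition row_dot :: "nat \<Rightarrow> mat \<Rightarrow> nat \<Rightarrow> vec \<Rightarrow> real" where
  "row_dot d W j x = (\<Sum>l<d. W j l * x l)"

definition net :: "nat \<Rightarrow> nat \<Rightarrow> real \<Rightarrow> vec \<Rightarrow> mat \<Rightarrow> vec \<Rightarrow> real" where
  "net m d \<rho> a W x = \<rho> / sqrt (real m) * (\<Sum>j<m. a j * max 0 (row_dot d W j x))"

definition net_grad :: "nat \<Rightarrow> nat \<Rightarrow> real \<Rightarrow> vec \<Rightarrow> mat \<Rightarrow> vec \<Rightarrow> mat" where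
  "net_grad m d \<rho> a W x = (\<lambda>j l. if j < m \<and> l < d then
       \<rho> / sqrt (real m) * a j * (if row_dot d W j x \<ge> 0 then 1 else 0) * x l else 0)"

definition emp_risk :: "nat \<Rightarrow> nat \<Rightarrow> real \<Rightarrow> vec \<Rightarrow> nat \<Rightarrow> (nat \<Rightarrow> vec) \<Rightarrow> (nat \<Rightarrow> real) \<Rightarrow> mat \<Rightarrow> real" where
  "emp_risk m d \<rho> a n xs ys W = (1 / real n) * (\<Sum>k<n. logloss (ys k * net m d \<rho> a W (xs k)))"

definition emp_risk_grad :: "nat \<Rightarrow> nat \<Rightarrow> real \<Rightarrow> vec \<Rightarrow> nat \<Rightarrow> (nat \<Rightarrow> vec) \<Rightarrow> (nat \<Rightarrow> real) \<Rightarrow> mat \<Rightarrow> mat" where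
  "emp_risk_grad m d \<rho> a n xs ys W = (\<lambda>j l. (1 / real n) *
      (\<Sum>k<n. logloss' (ys k * net m d \<rho> a W (xs k)) * ys k * net_grad m d \<rho> a W (xs k) j l))"

primrec gd :: "nat \<Rightarrow> nat \<Rightarrow> real \<Rightarrow> vec \<Rightarrow> nat \<Rightarrow> (nat \<Rightarrow> vec) \<Rightarrow> (nat \<Rightarrow> real) \<Rightarrow> real \<Rightarrow> mat \<Rightarrow> nat \<Rightarrow> mat" where
  "gd m d \<rho> a n xs ys \<eta> W0 0 = W0"
| "gd m d \<rho> a n xs ys \<eta> W0 (Suc i) =
     (let W = gd m d \<rho> a n xs ys \<eta> W0 i in
      (\<lambda>j l. W j l - \<eta> * emp_risk_grad m d \<rho> a n xs ys W j l))"

definition lin_risk :: "nat \<Rightarrow> nat \<Rightarrow> real \<Rightarrow> vec \<Rightarrow> nat \<Rightarrow> (nat \<Rightarrow> vec) \<Rightarrow> (nat \<Rightarrow> real) \<Rightarrow> mat \<Rightarrow> mat \<Rightarrow> real" where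
  "lin_risk m d \<rho> a n xs ys Wi V = (1 / real n) *
      (\<Sum>k<n. logloss (ys k * frob_inner m d (net_grad m d \<rho> a Wi (xs k)) V))"

end

theory Submission
  imports Defs
begin


lemma logloss_deriv: "DERIV logloss r :> logloss' r"
proof -
  have "DERIV (\<lambda>r. ln (1 + exp (- r))) r :> (exp (-r) * (-1)) / (1 + exp (-r))"
    by (auto intro!: derivative_eq_intros simp: add_pos_pos)
  moreover have "(exp (-r) * (-1)) / (1 + exp (-r)) = logloss' r"
    unfolding logloss'_def by (simp add: exp_minus field_simps add_pos_pos)
  ultimately show ?thesis unfolding logloss_def[abs_def] by simp
qed

lemma logloss'_deriv: "DERIV logloss' r :> exp r / (1 + exp r)^2"
proof -
  have "DERIV (\<lambda>r. - 1 / (1 + exp r)) r :> exp r / (1 + exp r)^2"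
    by (auto intro!: derivative_eq_intros simp: add_pos_pos power2_eq_square)
       (smt (verit) exp_gt_zero)
  then show ?thesis unfolding logloss'_def[abs_def] by simp
qed

lemma logloss''_le: "exp (r::real) / (1 + exp r)^2 \<le> 1/4"
proof -
  have "(1 + exp r)^2 - 4 * exp r = (1 - exp r)^2" by (simp add: power2_eq_square algebra_simps)
  then have "4 * exp r \<le> (1 + exp r)^2" using zero_le_power2[of "1 - exp r"] by linarith
  moreover have "1 + exp r \<noteq> 0" using exp_gt_zero[of r] by linarith
  ultimately show ?thesis by (simp add: divide_le_eq)
qed

lemma logloss'_mono: "a \<le> b \<Longrightarrow> logloss' a \<le> logloss' b"
  unfolding logloss'_def by (simp add: frac_le add_pos_pos)

lemma logloss'_lip: "a \<le> b \<Longrightarrow> logloss' b - logloss' a \<le> (b - a) / 4"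
proof (cases "a = b")
  case False
  assume "a \<le> b" with False have ab: "a < b" by simp
  then obtain z where "logloss' b - logloss' a = (b - a) * (exp z / (1 + exp z)^2)"
    using MVT2[of a b logloss' "\<lambda>z. exp z / (1 + exp z)^2"] logloss'_deriv by blast
  moreover have "(b - a) * (exp z / (1 + exp z)^2) \<le> (b - a) * (1/4)"
    using ab logloss''_le[of z] by (intro mult_left_mono) auto
  ultimately show ?thesis by simp
qed simp

lemma logloss_convex: "logloss a + logloss' a * (b - a) \<le> logloss b"
proof (cases a b rule: linorder_cases)
  case less
  then obtain z where z: "a < z" "z < b" "logloss b - logloss a = (b - a) * logloss' z"
    using MVT2[of a b logloss logloss'] logloss_deriv by blast
  have "(b - a) * logloss' a \<le> (b - a) * logloss' z"
    using z less logloss'_mono[of a z] by (intro mult_left_mono) auto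
  with z show ?thesis by (simp add: algebra_simps)
next
  case greater
  then obtain z where z: "b < z" "z < a" "logloss a - logloss b = (a - b) * logloss' z"
    using MVT2[of b a logloss logloss'] logloss_deriv by blast
  have "(a - b) * logloss' z \<le> (a - b) * logloss' a"
    using z greater logloss'_mono[of z a] by (intro mult_left_mono) auto
  with z show ?thesis by (simp add: algebra_simps)
qed simp

lemma logloss_smooth: "logloss b \<le> logloss a + logloss' a * (b - a) + (b - a)^2 / 8"
proof -
  define h where "h x = logloss a + logloss' a * (x - a) + (x - a)^2 / 8 - logloss x" for x
  have hd: "DERIV h x :> logloss' a + (x - a) / 4 - logloss' x" for x
    unfolding h_def
    by (auto intro!: derivative_eq_intros logloss_deriv simp: power2_eq_square field_simps)
  have "h a = 0" by (simp add: h_def)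
  have "0 \<le> h b"
  proof (cases a b rule: linorder_cases)
    case less
    then obtain z where z: "a < z" "z < b" "h b - h a = (b - a) * (logloss' a + (z - a) / 4 - logloss' z)"
      using MVT2[of a b h "\<lambda>x. logloss' a + (x - a) / 4 - logloss' x"] hd by blast
    have "0 \<le> logloss' a + (z - a) / 4 - logloss' z" using logloss'_lip[of a z] z by linarith
    with z less \<open>h a = 0\<close> show ?thesis by simp
  next
    case greater
    then obtain z where z: "b < z" "z < a" "h a - h b = (a - b) * (logloss' a + (z - a) / 4 - logloss' z)"
      using MVT2[of b a h "\<lambda>x. logloss' a + (x - a) / 4 - logloss' x"] hd by blast
    have "logloss' a - logloss' z \<le> (a - z) / 4" using logloss'_lip[of z a] z by simp
    then have "logloss' a + (z - a) / 4 - logloss' z \<le> 0" by (simp add: field_simps)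
    with z greater \<open>h a = 0\<close> have "(a - b) * (logloss' a + (z - a) / 4 - logloss' z) \<le> 0"
      by (simp add: mult_nonneg_nonpos)
    with z \<open>h a = 0\<close> show ?thesis by simp
  qed (use \<open>h a = 0\<close> in simp)
  then show ?thesis by (simp add: h_def)
qed



lemma fi_diff: "frob_inner m d A (\<lambda>j l. X j l - Y j l) = frob_inner m d A X - frob_inner m d A Y"
  unfolding frob_inner_def by (simp add: right_diff_distrib sum_subtractf)

lemma fi_comm: "frob_inner m d A B = frob_inner m d B A"
  unfolding frob_inner_def by (simp add: mult.commute)

lemma fi_step: "frob_inner m d A (\<lambda>j l. X j l - c * Y j l) = frob_inner m d A X - c * frob_inner m d A Y"
  unfolding frob_inner_def by (simp add: right_diff_distrib sum_subtractf sum_distrib_left algebra_simps)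

lemma fi_expand: "frob_inner m d (\<lambda>j l. X j l - c * Y j l) (\<lambda>j l. X j l - c * Y j l)
   = frob_inner m d X X - 2 * c * frob_inner m d X Y + c^2 * frob_inner m d Y Y"
  unfolding frob_inner_def
  by (simp add: sum_subtractf sum_distrib_left sum.distrib power2_eq_square algebra_simps)

lemma fi_nonneg: "0 \<le> frob_inner m d A A"
  unfolding frob_inner_def by (intro sum_nonneg) auto

lemma frob_sq: "(frob m d A)^2 = frob_inner m d A A"
  unfolding frob_def frob_inner_def by (simp add: sum_nonneg power2_eq_square)

lemma fi_cs: "(frob_inner m d A B)^2 \<le> frob_inner m d A A * frob_inner m d B B"
proof -
  have e: "frob_inner m d A B = (\<Sum>p\<in>{..<m} \<times> {..<d}. A (fst p) (snd p) * B (fst p) (snd p))" for A B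
    unfolding frob_inner_def by (simp add: sum.cartesian_product case_prod_beta)
  show ?thesis unfolding e using Cauchy_Schwarz_ineq_sum[of "\<lambda>p. A (fst p) (snd p)" "\<lambda>p. B (fst p) (snd p)"]
    by (simp add: power2_eq_square)
qed

lemma net_eq: "net m d \<rho> a W x = frob_inner m d (net_grad m d \<rho> a W x) W"
proof -
  have "\<rho> / sqrt (real m) * (a j * max 0 (row_dot d W j x)) =
    (\<Sum>l<d. (if j < m \<and> l < d then \<rho> / sqrt (real m) * a j * (if row_dot d W j x \<ge> 0 then 1 else 0) * x l else 0) * W j l)"
    if "j < m" for j
    using that unfolding row_dot_def
    by (auto simp: sum_distrib_left max_def algebra_simps sum_divide_distrib intro!: sum.cong)
  then show ?thesis unfolding net_def frob_inner_def net_grad_def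
    by (simp add: sum_distrib_left)
qed

lemma grad_norm:
  assumes "0 < m" "vnorm d x \<le> 1" "\<And>j. j < m \<Longrightarrow> a j = 1 \<or> a j = -1"
  shows "frob_inner m d (net_grad m d \<rho> a W x) (net_grad m d \<rho> a W x) \<le> \<rho>^2"
proof -
  have S: "(\<Sum>l<d. (x l)^2) \<le> 1" using assms(2) unfolding vnorm_def by simp
  have S0: "0 \<le> (\<Sum>l<d. (x l)^2)" by (simp add: sum_nonneg)
  have "(\<Sum>l<d. net_grad m d \<rho> a W x j l * net_grad m d \<rho> a W x j l) \<le> \<rho>^2 / real m"
    if j: "j < m" for j
  proof -
    define c where "c = \<rho> / sqrt (real m) * a j * (if row_dot d W j x \<ge> 0 then 1 else 0)"
    have "(\<Sum>l<d. net_grad m d \<rho> a W x j l * net_grad m d \<rho> a W x j l) = c^2 * (\<Sum>l<d. (x l)^2)"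
      using j unfolding net_grad_def c_def
      by (simp add: sum_distrib_left power2_eq_square algebra_simps sum_divide_distrib)
    also have "\<dots> \<le> c^2" using S by (simp add: mult_left_le)
    also have "\<dots> \<le> \<rho>^2 / real m"
    proof -
      have "(a j)^2 = 1" using assms(3)[OF j] by auto
      then show ?thesis using assms(1) unfolding c_def
        by (auto simp: power_mult_distrib power_divide)
    qed
    finally show ?thesis .
  qed
  then have "frob_inner m d (net_grad m d \<rho> a W x) (net_grad m d \<rho> a W x) \<le> (\<Sum>j<m. \<rho>^2 / real m)"
    unfolding frob_inner_def by (intro sum_mono) auto
  also have "\<dots> = \<rho>^2" using assms(1) by simp
  finally show ?thesis .
qed

lemma grad_inner:
  "frob_inner m d (emp_risk_grad m d \<rho> a n xs ys W) D =
   (1 / real n) * (\<Sum>k<n. logloss' (ys k * net m d \<rho> a W (xs k)) * ys k *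
       frob_inner m d (net_grad m d \<rho> a W (xs k)) D)"
  unfolding frob_inner_def emp_risk_grad_def
  apply (simp add: sum_distrib_left sum_distrib_right mult.assoc)
  apply (rule trans[OF sum.cong[OF refl] sum.swap])
  apply (rule sum.swap)
  done


lemma one_step:
  fixes m d n :: nat and \<rho> \<eta> :: real and a :: vec
    and xs :: "nat \<Rightarrow> vec" and ys :: "nat \<Rightarrow> real" and W Z :: mat
  assumes "0 < n" and "0 < m"
    and "\<And>k. k < n \<Longrightarrow> vnorm d (xs k) \<le> 1"
    and "\<And>k. k < n \<Longrightarrow> ys k = 1 \<or> ys k = -1"
    and "\<And>j. j < m \<Longrightarrow> a j = 1 \<or> a j = -1"
    and "0 < \<rho>"
    and "0 < \<eta>" and "\<eta> \<le> 4 / \<rho>^2"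
  defines "G \<equiv> emp_risk_grad m d \<rho> a n xs ys W"
  defines "W' \<equiv> (\<lambda>j l. W j l - \<eta> * G j l)"
  shows "(frob m d (\<lambda>j l. W' j l - Z j l))^2 + 2 * \<eta> * lin_risk m d \<rho> a n xs ys W W'
     \<le> (frob m d (\<lambda>j l. W j l - Z j l))^2 + 2 * \<eta> * lin_risk m d \<rho> a n xs ys W Z"
proof -
  define g where "g k = net_grad m d \<rho> a W (xs k)" for k
  define c where "c k = logloss' (ys k * net m d \<rho> a W (xs k))" for k
  define s where "s k V = ys k * frob_inner m d (g k) V" for k V
  define p where "p k = ys k * frob_inner m d (g k) G" for k
  define D where "D = (\<lambda>j l. W j l - Z j l)"
  define q where "q k = ys k * frob_inner m d (g k) D" for k
  define N where "N = frob_inner m d G G"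
  define P where "P = frob_inner m d G D"
  have N0: "0 \<le> N" unfolding N_def by (rule fi_nonneg)
  have cs: "c k = logloss' (s k W)" for k unfolding c_def s_def g_def net_eq ..
  have Neq: "N = (1 / real n) * (\<Sum>k<n. c k * p k)"
    unfolding N_def G_def grad_inner c_def p_def g_def by (simp add: mult.assoc)
  have Peq: "P = (1 / real n) * (\<Sum>k<n. c k * q k)"
    unfolding P_def G_def grad_inner c_def q_def g_def by (simp add: mult.assoc)
  have sW': "s k W' = s k W - \<eta> * p k" for k
    unfolding s_def p_def W'_def fi_step by (simp add: algebra_simps)
  have sZ: "s k Z = s k W - q k" for k
    unfolding s_def q_def D_def fi_diff by (simp add: algebra_simps)
  have eta4: "\<eta> * \<rho>^2 \<le> 4" using assms(6,8) by (simp add: field_simps)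
  have key: "logloss (s k W') \<le> logloss (s k Z) + c k * q k - \<eta> * (c k * p k) + \<eta> * N / 2"
    if k: "k < n" for k
  proof -
    have B: "logloss (s k W') \<le> logloss (s k W) + c k * (- \<eta> * p k) + (- \<eta> * p k)^2 / 8"
      using logloss_smooth[where a="s k W" and b="s k W'"] unfolding sW' cs by simp
    have A: "logloss (s k W) + c k * (- q k) \<le> logloss (s k Z)"
      using logloss_convex[where a="s k W" and b="s k Z"] unfolding sZ cs by simp
    have y2: "(ys k)^2 = 1" using assms(4)[OF k] by auto
    have "(p k)^2 = (frob_inner m d (g k) G)^2" unfolding p_def by (simp add: power_mult_distrib y2)
    also have "\<dots> \<le> frob_inner m d (g k) (g k) * N" unfolding N_def by (rule fi_cs)
    also have "\<dots> \<le> \<rho>^2 * N" using grad_norm[OF assms(2) assms(3)[OF k] assms(5)] N0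
      unfolding g_def by (intro mult_right_mono) auto
    finally have p2: "(p k)^2 \<le> \<rho>^2 * N" .
    have "(- \<eta> * p k)^2 / 8 = \<eta> * (\<eta> * (p k)^2) / 8" by (simp add: power2_eq_square)
    also have "\<dots> \<le> \<eta> * (\<eta> * (\<rho>^2 * N)) / 8"
      using p2 assms(7) by (intro divide_right_mono mult_left_mono) auto
    also have "\<dots> = \<eta> * ((\<eta> * \<rho>^2) * N) / 8" by simp
    also have "\<dots> \<le> \<eta> * (4 * N) / 8"
      using eta4 N0 assms(7) by (intro divide_right_mono mult_left_mono mult_right_mono) auto
    also have "\<dots> = \<eta> * N / 2" by simp
    finally have X: "(- \<eta> * p k)^2 / 8 \<le> \<eta> * N / 2" .
    have e1: "c k * (- \<eta> * p k) = - (\<eta> * (c k * p k))" by simp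
    have e2: "c k * (- q k) = - (c k * q k)" by simp
    show ?thesis using A B X unfolding e1 e2 by linarith
  qed
  have "(\<Sum>k<n. logloss (s k W')) \<le> (\<Sum>k<n. logloss (s k Z) + c k * q k - \<eta> * (c k * p k) + \<eta> * N / 2)"
    using key by (intro sum_mono) auto
  also have "\<dots> = (\<Sum>k<n. logloss (s k Z)) + (\<Sum>k<n. c k * q k) - \<eta> * (\<Sum>k<n. c k * p k) + real n * (\<eta> * N / 2)"
    by (simp add: sum.distrib sum_subtractf sum_distrib_left)
  finally have sum_ineq: "(\<Sum>k<n. logloss (s k W')) \<le> (\<Sum>k<n. logloss (s k Z)) + (\<Sum>k<n. c k * q k) - \<eta> * (\<Sum>k<n. c k * p k) + real n * (\<eta> * N / 2)" .
  have LW': "lin_risk m d \<rho> a n xs ys W W' = (1 / real n) * (\<Sum>k<n. logloss (s k W'))"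
    unfolding lin_risk_def s_def g_def ..
  have LZ: "lin_risk m d \<rho> a n xs ys W Z = (1 / real n) * (\<Sum>k<n. logloss (s k Z))"
    unfolding lin_risk_def s_def g_def ..
  have n0: "0 < real n" using assms(1) by simp
  have Lineq: "lin_risk m d \<rho> a n xs ys W W' \<le> lin_risk m d \<rho> a n xs ys W Z + P - \<eta> * N + \<eta> * N / 2"
  proof -
    have "lin_risk m d \<rho> a n xs ys W W' \<le> (1 / real n) * ((\<Sum>k<n. logloss (s k Z)) + (\<Sum>k<n. c k * q k) - \<eta> * (\<Sum>k<n. c k * p k) + real n * (\<eta> * N / 2))"
      unfolding LW' using sum_ineq n0 by (intro mult_left_mono) auto
    also have "\<dots> = lin_risk m d \<rho> a n xs ys W Z + P - \<eta> * N + \<eta> * N / 2"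
      unfolding LZ Peq Neq using n0 by (simp add: distrib_left right_diff_distrib)
    finally show ?thesis .
  qed
  have "(\<lambda>j l. W' j l - Z j l) = (\<lambda>j l. D j l - \<eta> * G j l)"
    unfolding W'_def D_def by (simp add: algebra_simps)
  moreover have "frob_inner m d D G = P" unfolding P_def by (rule fi_comm)
  ultimately have F: "(frob m d (\<lambda>j l. W' j l - Z j l))^2 = (frob m d D)^2 - 2 * \<eta> * P + \<eta>^2 * N"
    unfolding frob_sq N_def by (simp only: fi_expand)
  have "(frob m d D)^2 - 2 * \<eta> * P + \<eta>^2 * N + 2 * \<eta> * lin_risk m d \<rho> a n xs ys W W'
      \<le> (frob m d D)^2 - 2 * \<eta> * P + \<eta>^2 * N + 2 * \<eta> * (lin_risk m d \<rho> a n xs ys W Z + P - \<eta> * N + \<eta> * N / 2)"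
    using Lineq assms(7) by simp
  also have "\<dots> = (frob m d D)^2 + 2 * \<eta> * lin_risk m d \<rho> a n xs ys W Z"
    by (simp add: algebra_simps power2_eq_square)
  finally show ?thesis unfolding F by (simp add: D_def)
qed

theorem lemmaA10:
  fixes m d n :: nat and \<rho> \<eta> :: real and a :: vec
    and xs :: "nat \<Rightarrow> vec" and ys :: "nat \<Rightarrow> real" and W0 Z :: mat and t :: nat
  assumes "0 < n" and "0 < m"
    and "\<And>k. k < n \<Longrightarrow> vnorm d (xs k) \<le> 1"
    and "\<And>k. k < n \<Longrightarrow> ys k = 1 \<or> ys k = -1"
    and "\<And>j. j < m \<Longrightarrow> a j = 1 \<or> a j = -1"
    and "0 < \<rho>"
    and "0 < \<eta>" and "\<eta> \<le> 4 / \<rho>^2"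
  shows "(frob m d (\<lambda>j l. gd m d \<rho> a n xs ys \<eta> W0 t j l - Z j l))^2
           + 2 * \<eta> * (\<Sum>i<t. lin_risk m d \<rho> a n xs ys (gd m d \<rho> a n xs ys \<eta> W0 i)
                                   (gd m d \<rho> a n xs ys \<eta> W0 (Suc i)))
         \<le> (frob m d (\<lambda>j l. W0 j l - Z j l))^2
           + 2 * \<eta> * (\<Sum>i<t. lin_risk m d \<rho> a n xs ys (gd m d \<rho> a n xs ys \<eta> W0 i) Z)"
proof (induction t)
  case 0
  then show ?case by simp
next
  case (Suc t)
  let ?g = "gd m d \<rho> a n xs ys \<eta> W0"
  have step: "(frob m d (\<lambda>j l. ?g (Suc t) j l - Z j l))^2 + 2 * \<eta> * lin_risk m d \<rho> a n xs ys (?g t) (?g (Suc t))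
     \<le> (frob m d (\<lambda>j l. ?g t j l - Z j l))^2 + 2 * \<eta> * lin_risk m d \<rho> a n xs ys (?g t) Z"
    using one_step[OF assms, where W="?g t" and Z=Z] by (simp add: Let_def)
  show ?case using Suc.IH step by (simp add: distrib_left)
qed

end
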